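(* Let $\mathcal{P}=(|K|,V)$ be a polyhedral model with cell poset model $\mathbb{F}(\mathcal{P})=(\tilde K,\preceq,\mathcal{V})$. For every $\downarrow$-path $\pi:[0;\ell]\to\tilde K$ there is a topological path $\pi':[0,1]\to|K|$ such that (i) $\mathbb{F}(\pi'(0))=\pi(0)$, (ii) $\mathbb{F}(\pi'(1))=\pi(\ell)$, and (iii) for every $r\in(0,1)$ there is $i<\ell$ with $\mathbb{F}(\pi'(r))=\pi(i)$.
   Context: Fix a set PL of proposition letters. A simplex $\sigma\subseteq\mathbb{R}^m$ is the convex hull of $d+1$ affinely independent points $v_0,\dots,v_d$; its faces are the simplices spanned by nonempty subsets of its vertices. Its relative interior (cell) is $\tilde\sigma=\{\sum_i\lambda_iv_i:\lambda_i\in(0,1],\sum_i\lambda_i=1\}$. A simplicial complex $K$ is a finite set of simplices in $\mathbb{R}^m$ closed under faces, any two of which intersect in a common face or in $\emptyset$. Its set of cells $\tilde K=\{\tilde\sigma:\sigma\in K\}$ is partially ordered by $\tilde\sigma_1\preceq\tilde\sigma_2$ iff $\tilde\sigma_1$ is contained in the topological closure of $\tilde\sigma_2$ (equivalently, $\sigma_1$ is a face of $\sigma_2$). The polyhedron $|K|$ is the union of the simplices of $K$ with the subspace topology; its cells partition $|K|$. A polyhedral model is $\mathcal{P}=(|K|,V)$ with $V:\mathrm{PL}\to\mathcal{P}(|K|)$ such that each $V(p)$ is a union of cells. Its cell poset model is $\mathbb{F}(\mathcal{P})=(\tilde K,\preceq,\mathcal{V})$ with $\tilde\sigma\in\mathcal{V}(p)$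 iff $\tilde\sigma\subseteq V(p)$; for $x\in|K|$, $\mathbb{F}(x)$ is the unique cell containing $x$. A topological path is a continuous map $[0,1]\to|K|$. In a poset $(W,\preceq)$, a $\downarrow$-path of length $\ell\ge1$ is $\pi:\{0,\dots,\ell\}\to W$ with $\pi(i),\pi(i+1)$ comparable under $\preceq$ for each $i<\ell$, and $\pi(\ell)\preceq\pi(\ell-1)$. *)

theory Defs
  imports "HOL-Analysis.Analysis"
begin

text \<open>A simplex is represented by its (finite, nonempty, affinely independent) vertex set S;
  the simplex itself is convex hull S, its faces are convex hulls of nonempty subsets of S.\<close>

definition simplex_vertices :: "'a::euclidean_space set \<Rightarrow> bool" where
  "simplex_vertices S \<longleftrightarrow> finite S \<and> S \<noteq> {} \<and> \<not> affine_dependent S"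

definition cell :: "'a::euclidean_space set \<Rightarrow> 'a set" where
  "cell S = {(\<Sum>v\<in>S. l v *\<^sub>R v) | l. (\<forall>v\<in>S. 0 < l v \<and> l v \<le> 1) \<and> sum l S = 1}"

text \<open>A simplicial complex, given as the finite set of vertex sets of its simplices.\<close>
definition simplicial_complex :: "'a::euclidean_space set set \<Rightarrow> bool" where
  "simplicial_complex K \<longleftrightarrow>
     finite K \<and>
     (\<forall>S\<in>K. simplex_vertices S) \<and>
     (\<forall>S\<in>K. \<forall>T. T \<subseteq> S \<and> T \<noteq> {} \<longrightarrow> T \<in> K) \<and>
     (\<forall>S\<in>K. \<forall>T\<in>K. convex hull S \<inter> convex hull T = {} \<or>
        (\<exists>U. U \<noteq> {} \<and> U \<subseteq> S \<and> U \<subseteq> T \<and> convex hull S \<inter> convex hull T = convex hull U))"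

definition polyhedron :: "'a::euclidean_space set set \<Rightarrow> 'a set" where
  "polyhedron K = (\<Union>S\<in>K. convex hull S)"

definition cells :: "'a::euclidean_space set set \<Rightarrow> 'a set set" where
  "cells K = cell ` K"

definition cell_le :: "'a::euclidean_space set \<Rightarrow> 'a set \<Rightarrow> bool" where
  "cell_le c1 c2 \<longleftrightarrow> c1 \<subseteq> closure c2"

definition polyhedral_model :: "'a::euclidean_space set set \<Rightarrow> ('p \<Rightarrow> 'a set) \<Rightarrow> bool" where
  "polyhedral_model K V \<longleftrightarrow> simplicial_complex K \<and>
     (\<forall>p. \<exists>C. C \<subseteq> cells K \<and> V p = \<Union>C)"

definition cell_val :: "'a::euclidean_space set set \<Rightarrow> ('p \<Rightarrow> 'a set) \<Rightarrow> 'p \<Rightarrow> 'a set set" where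
  "cell_val K V p = {c \<in> cells K. c \<subseteq> V p}"

definition cell_of :: "'a::euclidean_space set set \<Rightarrow> 'a \<Rightarrow> 'a set" where
  "cell_of K x = (THE c. c \<in> cells K \<and> x \<in> c)"

definition down_path :: "'a::euclidean_space set set \<Rightarrow> (nat \<Rightarrow> 'a set) \<Rightarrow> nat \<Rightarrow> bool" where
  "down_path K \<pi> l \<longleftrightarrow> 1 \<le> l \<and>
     (\<forall>i\<le>l. \<pi> i \<in> cells K) \<and>
     (\<forall>i<l. cell_le (\<pi> i) (\<pi> (Suc i)) \<or> cell_le (\<pi> (Suc i)) (\<pi> i)) \<and>
     cell_le (\<pi> l) (\<pi> (l - 1))"

end

theory Submission imports Defs begin

lemma bary_unique:
  fixes S :: "'a::euclidean_space set"
  assumes "finite S" "\<not> affine_dependent S" "sum a S = 1" "sum b S = 1"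
    "(\<Sum>v\<in>S. a v *\<^sub>R v) = (\<Sum>v\<in>S. b v *\<^sub>R v)" "v \<in> S"
  shows "a v = b v"
proof -
  let ?U = "\<lambda>v. a v - b v"
  have "sum ?U S = 0" using assms by (simp add: sum_subtractf)
  moreover have "(\<Sum>v\<in>S. ?U v *\<^sub>R v) = 0"
    using assms(5) by (simp add: scaleR_diff_left sum_subtractf)
  ultimately have "\<forall>v\<in>S. ?U v = 0"
    using assms(1,2) affine_dependent_explicit_finite by blast
  thus ?thesis using assms(6) by simp
qed

lemma cell_sub_hull: assumes "finite S" shows "cell S \<subseteq> convex hull S"
  proof
  fix x assume "x \<in> cell S"
  then obtain l where "\<forall>v\<in>S. 0 < l v \<and> l v \<le> 1" "sum l S = 1" "x = (\<Sum>v\<in>S. l v *\<^sub>R v)"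
    unfolding cell_def by blast
  thus "x \<in> convex hull S" unfolding convex_hull_finite[OF assms]
    by (intro CollectI exI[of _ l]) (auto intro: less_imp_le)
qed

lemma cell_in_subhull:
  fixes S :: "'a::euclidean_space set"
  assumes "finite S" "\<not> affine_dependent S" "x \<in> cell S" "U \<subseteq> S" "x \<in> convex hull U"
  shows "S \<subseteq> U"
proof
  fix w assume w: "w \<in> S"
  from assms(3) obtain l where l: "\<forall>v\<in>S. 0 < l v \<and> l v \<le> 1" "sum l S = 1" "x = (\<Sum>v\<in>S. l v *\<^sub>R v)"
    unfolding cell_def by blast
  have fU: "finite U" using assms(1,4) finite_subset by blast
  from assms(5) obtain m where m: "\<forall>v\<in>U. 0 \<le> m v" "sum m U = 1" "(\<Sum>v\<in>U. m v *\<^sub>R v) = x"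
    unfolding convex_hull_finite[OF fU] by blast
  define m' where "m' = (\<lambda>v. if v \<in> U then m v else 0)"
  have "sum m' S = sum m' U" using assms(1,4) by (intro sum.mono_neutral_right) (auto simp: m'_def)
  hence s1: "sum m' S = 1" using m(2) by (simp add: m'_def)
  have "(\<Sum>v\<in>S. m' v *\<^sub>R v) = (\<Sum>v\<in>U. m' v *\<^sub>R v)"
    using assms(1,4) by (intro sum.mono_neutral_right) (auto simp: m'_def)
  hence s2: "(\<Sum>v\<in>S. m' v *\<^sub>R v) = x" using m(3) by (simp add: m'_def)
  have "l w = m' w" using bary_unique[OF assms(1,2) l(2) s1 _ w] l(3) s2 by simp
  thus "w \<in> U" using l(1) w by (auto simp: m'_def split: if_splits)
qed

lemma sc_simplex:
  assumes "simplicial_complex K" "S \<in> K"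
  shows "finite S" "S \<noteq> {}" "\<not> affine_dependent S"
proof -
  have "\<forall>S\<in>K. simplex_vertices S" using assms(1) unfolding simplicial_complex_def by (elim conjE)
  hence "simplex_vertices S" using assms(2) by blast
  thus "finite S" "S \<noteq> {}" "\<not> affine_dependent S" unfolding simplex_vertices_def by auto
qed

lemma cell_unique:
  assumes K: "simplicial_complex K" and "S \<in> K" "T \<in> K" "x \<in> cell S" "x \<in> cell T"
  shows "S = T"
proof -
  have fin: "finite S" "finite T" and ai: "\<not> affine_dependent S" "\<not> affine_dependent T"
    using sc_simplex[OF K assms(2)] sc_simplex[OF K assms(3)] by auto
  have x: "x \<in> convex hull S \<inter> convex hull T" using cell_sub_hull fin assms(4,5) by blast
  have "\<forall>S\<in>K. \<forall>T\<in>K. convex hull S \<inter> convex hull T = {} \<or>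
        (\<exists>U. U \<noteq> {} \<and> U \<subseteq> S \<and> U \<subseteq> T \<and> convex hull S \<inter> convex hull T = convex hull U)"
    using K unfolding simplicial_complex_def by (elim conjE)
  hence "convex hull S \<inter> convex hull T = {} \<or>
        (\<exists>U. U \<noteq> {} \<and> U \<subseteq> S \<and> U \<subseteq> T \<and> convex hull S \<inter> convex hull T = convex hull U)"
    using assms(2,3) by blast
  then obtain U where U: "U \<subseteq> S" "U \<subseteq> T" "convex hull S \<inter> convex hull T = convex hull U"
    using x by blast
  have "S \<subseteq> U" using cell_in_subhull[OF fin(1) ai(1) assms(4) U(1)] x U(3) by blast
  moreover have "T \<subseteq> U" using cell_in_subhull[OF fin(2) ai(2) assms(5) U(2)] x U(3) by blast
  ultimately show ?thesis using U by blast
qed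

lemma cell_of_eq:
  assumes K: "simplicial_complex K" and "S \<in> K" "x \<in> cell S"
  shows "cell_of K x = cell S"
  unfolding cell_of_def
proof (rule the_equality)
  show "cell S \<in> cells K \<and> x \<in> cell S" using assms by (auto simp: cells_def)
  fix c assume "c \<in> cells K \<and> x \<in> c"
  then obtain T where "T \<in> K" "c = cell T" "x \<in> cell T" by (auto simp: cells_def)
  thus "c = cell S" using cell_unique[OF K assms(2) _ assms(3)] by auto
qed

lemma cell_seg:
  fixes B :: "'a::euclidean_space set"
  assumes "finite B" "A \<subseteq> closure (cell B)" "a \<in> A" "b \<in> cell B" "0 < s" "s \<le> 1"
  shows "(1 - s) *\<^sub>R a + s *\<^sub>R b \<in> cell B"
proof -
  have "closure (cell B) \<subseteq> convex hull B"
    by (rule closure_minimal[OF cell_sub_hull[OF assms(1)]])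
       (simp add: compact_imp_closed finite_imp_compact_convex_hull assms(1))
  hence "a \<in> convex hull B" using assms(2,3) by blast
  then obtain mu where mu: "\<forall>v\<in>B. 0 \<le> mu v" "sum mu B = 1" "(\<Sum>v\<in>B. mu v *\<^sub>R v) = a"
    unfolding convex_hull_finite[OF assms(1)] by blast
  from assms(4) obtain la where la: "\<forall>v\<in>B. 0 < la v \<and> la v \<le> 1" "sum la B = 1" "b = (\<Sum>v\<in>B. la v *\<^sub>R v)"
    unfolding cell_def by blast
  define c where "c = (\<lambda>v. (1 - s) * mu v + s * la v)"
  have "sum c B = (1 - s) * sum mu B + s * sum la B"
    unfolding c_def by (simp add: sum.distrib sum_distrib_left)
  hence sc: "sum c B = 1" using mu(2) la(2) by simp
  have pos: "\<forall>v\<in>B. 0 < c v" unfolding c_def using mu(1) la(1) assms(5,6)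
    by (metis add_nonneg_pos diff_ge_0_iff_ge mult_nonneg_nonneg mult_pos_pos)
  have le: "\<forall>v\<in>B. c v \<le> 1"
  proof
    fix v assume "v \<in> B"
    hence "c v \<le> sum c B" using pos assms(1) by (intro member_le_sum) auto
    thus "c v \<le> 1" using sc by simp
  qed
  have "(1 - s) *\<^sub>R a + s *\<^sub>R b = (\<Sum>v\<in>B. c v *\<^sub>R v)"
    unfolding c_def mu(3)[symmetric] la(3)
    by (simp add: scaleR_sum_right sum.distrib scaleR_add_left)
  thus ?thesis unfolding cell_def mem_Collect_eq
    by (intro exI[of _ c]) (use sc pos le in auto)
qed

lemma cell_nonempty:
  assumes "finite S" "S \<noteq> {}" shows "\<exists>x. x \<in> cell S"
proof -
  have c: "card S > 0" using assms by (simp add: card_gt_0_iff)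
  have "(\<Sum>v\<in>S. (1 / real (card S)) *\<^sub>R v) \<in> cell S"
    unfolding cell_def mem_Collect_eq
  proof (intro exI[of _ "\<lambda>_. 1 / real (card S)"] conjI ballI refl)
    show "sum (\<lambda>_. 1 / real (card S)) S = 1" using c by simp
    fix v show "0 < 1 / real (card S)" using c by simp
    show "1 / real (card S) \<le> 1" using c by simp
  qed
  thus ?thesis by blast
qed

lemma chain_path:
  fixes x :: "nat \<Rightarrow> 'a::euclidean_space"
  assumes "1 \<le> n"
  shows "\<exists>g. path g \<and> g 0 = x 0 \<and> g 1 = x n \<and>
    (\<forall>r\<in>{0<..<1}. (\<exists>j. 0 < j \<and> j < n \<and> g r = x j) \<or>
        (\<exists>j<n. \<exists>t. 0 < t \<and> t < 1 \<and> g r = (1 - t) *\<^sub>R x j + t *\<^sub>R x (Suc j)))"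
  using assms
proof (induction n arbitrary: x)
  case 0 then show ?case by simp
next
  case (Suc n)
  show ?case
  proof (cases "n = 0")
    case True
    show ?thesis
    proof (intro exI conjI ballI)
      show "path (linepath (x 0) (x 1))" by simp
      show "linepath (x 0) (x 1) 0 = x 0" by (simp add: linepath_def)
      show "linepath (x 0) (x 1) 1 = x (Suc n)" using True by (simp add: linepath_def)
      fix r :: real assume "r \<in> {0<..<1}"
      thus "(\<exists>j. 0 < j \<and> j < Suc n \<and> linepath (x 0) (x 1) r = x j) \<or>
        (\<exists>j<Suc n. \<exists>t. 0 < t \<and> t < 1 \<and> linepath (x 0) (x 1) r = (1 - t) *\<^sub>R x j + t *\<^sub>R x (Suc j))"
        by (auto simp: linepath_def)
    qed
  next
    case False
    then obtain g where g: "path g" "g 0 = x 1" "g 1 = x (Suc n)"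
      "\<forall>r\<in>{0<..<1}. (\<exists>j. 0 < j \<and> j < n \<and> g r = x (Suc j)) \<or>
        (\<exists>j<n. \<exists>t. 0 < t \<and> t < 1 \<and> g r = (1 - t) *\<^sub>R x (Suc j) + t *\<^sub>R x (Suc (Suc j)))"
      using Suc.IH[of "\<lambda>k. x (Suc k)"] by auto
    let ?h = "linepath (x 0) (x 1) +++ g"
    show ?thesis
    proof (intro exI conjI ballI)
      show "path ?h" using g by (intro path_join_imp path_linepath) (auto simp: pathstart_def)
      show "?h 0 = x 0" by (simp add: joinpaths_def linepath_def)
      show "?h 1 = x (Suc n)" using g by (simp add: joinpaths_def)
      fix r :: real assume r: "r \<in> {0<..<1}"
      show "(\<exists>j. 0 < j \<and> j < Suc n \<and> ?h r = x j) \<or>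
        (\<exists>j<Suc n. \<exists>t. 0 < t \<and> t < 1 \<and> ?h r = (1 - t) *\<^sub>R x j + t *\<^sub>R x (Suc j))"
      proof (cases "r \<le> 1/2")
        case True
        show ?thesis
        proof (cases "r = 1/2")
          case True
          have "?h r = x 1" unfolding True by (simp add: joinpaths_def linepath_def)
          thus ?thesis using False by auto
        next
          case False
          hence "?h r = (1 - 2*r) *\<^sub>R x 0 + (2*r) *\<^sub>R x (Suc 0)" using \<open>r \<le> 1/2\<close>
            by (simp add: joinpaths_def linepath_def)
          moreover have "0 < 2*r" "2*r < 1" using r False \<open>r \<le> 1/2\<close> by auto
          ultimately show ?thesis by blast
        qed
      next
        case False
        hence hr: "?h r = g (2*r - 1)" by (simp add: joinpaths_def)
        have "2*r - 1 \<in> {0<..<1}" using r False by auto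
        from g(4)[rule_format, OF this] show ?thesis
        proof
          assume "\<exists>j. 0 < j \<and> j < n \<and> g (2 * r - 1) = x (Suc j)"
          then obtain j where "0 < j" "j < n" "g (2 * r - 1) = x (Suc j)" by blast
          thus ?thesis using hr by (intro disjI1 exI[of _ "Suc j"]) auto
        next
          assume "\<exists>j<n. \<exists>t. 0 < t \<and> t < 1 \<and> g (2 * r - 1) = (1 - t) *\<^sub>R x (Suc j) + t *\<^sub>R x (Suc (Suc j))"
          then obtain j t where "j < n" "0 < t" "t < 1" "g (2 * r - 1) = (1 - t) *\<^sub>R x (Suc j) + t *\<^sub>R x (Suc (Suc j))" by blast
          thus ?thesis using hr by (intro disjI2 exI[of _ "Suc j"]) auto
        qed
      qed
    qed
  qed
qed

theorem lemma10:
  fixes K :: "'a::euclidean_space set set" and V :: "'p \<Rightarrow> 'a set"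
    and \<pi> :: "nat \<Rightarrow> 'a set" and l :: nat
  assumes "polyhedral_model K V"
    and "down_path K \<pi> l"
  shows "\<exists>p :: real \<Rightarrow> 'a. path p \<and> path_image p \<subseteq> polyhedron K \<and>
           cell_of K (p 0) = \<pi> 0 \<and> cell_of K (p 1) = \<pi> l \<and>
           (\<forall>r\<in>{0<..<1}. \<exists>i<l. cell_of K (p r) = \<pi> i)"
proof -
  have K: "simplicial_complex K" using assms(1) by (simp add: polyhedral_model_def)
  have l1: "1 \<le> l" and pc: "\<forall>i\<le>l. \<pi> i \<in> cells K"
    and cmp: "\<forall>i<l. cell_le (\<pi> i) (\<pi> (Suc i)) \<or> cell_le (\<pi> (Suc i)) (\<pi> i)"
    and last: "cell_le (\<pi> l) (\<pi> (l - 1))"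
    using assms(2) unfolding down_path_def by auto
  define S where "S = (\<lambda>i. SOME T. T \<in> K \<and> \<pi> i = cell T)"
  have S: "S i \<in> K \<and> \<pi> i = cell (S i)" if "i \<le> l" for i
  proof -
    have "\<exists>T. T \<in> K \<and> \<pi> i = cell T" using pc that by (auto simp: cells_def)
    thus ?thesis unfolding S_def by (rule someI_ex)
  qed
  have finS: "finite (S i)" "S i \<noteq> {}" if "i \<le> l" for i
    using sc_simplex[OF K] S[OF that] by auto
  define x where "x = (\<lambda>i. SOME y. y \<in> \<pi> i)"
  have x: "x i \<in> \<pi> i" if "i \<le> l" for i
  proof -
    have "\<exists>y. y \<in> \<pi> i" using S[OF that] cell_nonempty[OF finS[OF that]] by simp
    thus ?thesis unfolding x_def by (rule someI_ex)
  qed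
  have cof: "cell_of K y = \<pi> i" if "i \<le> l" "y \<in> \<pi> i" for i y
    using cell_of_eq[OF K, of "S i" y] S[OF that(1)] that(2) by simp
  have seg: "(1 - s) *\<^sub>R x i + s *\<^sub>R x k \<in> \<pi> k"
    if "i \<le> l" "k \<le> l" "cell_le (\<pi> i) (\<pi> k)" "0 < s" "s \<le> 1" for i k s
  proof -
    have a: "x i \<in> \<pi> i" "x k \<in> cell (S k)" "\<pi> i \<subseteq> closure (cell (S k))"
      using x[OF that(1)] x[OF that(2)] S[OF that(2)] that(3) by (auto simp: cell_le_def)
    have "(1 - s) *\<^sub>R x i + s *\<^sub>R x k \<in> cell (S k)"
      by (rule cell_seg[OF finS(1)[OF that(2)] a(3) a(1) a(2) that(4) that(5)])
    thus ?thesis using S[OF that(2)] by simp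
  qed
  have mid: "\<exists>k<l. (1 - t) *\<^sub>R x j + t *\<^sub>R x (Suc j) \<in> \<pi> k"
    if j: "j < l" and t: "0 < t" "t < 1" for j t
  proof (cases "cell_le (\<pi> j) (\<pi> (Suc j))")
    case True
    show ?thesis
    proof (cases "Suc j < l")
      case True
      have "(1 - t) *\<^sub>R x j + t *\<^sub>R x (Suc j) \<in> \<pi> (Suc j)"
        using j t True by (intro seg[OF _ _ \<open>cell_le (\<pi> j) (\<pi> (Suc j))\<close>]) auto
      thus ?thesis using True by blast
    next
      case False
      hence jl: "Suc j = l" using j by simp
      hence c: "cell_le (\<pi> (Suc j)) (\<pi> j)" using last by (metis diff_Suc_1)
      have "(1 - (1 - t)) *\<^sub>R x (Suc j) + (1 - t) *\<^sub>R x j \<in> \<pi> j"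
        using j t jl by (intro seg[OF _ _ c]) auto
      hence "(1 - t) *\<^sub>R x j + t *\<^sub>R x (Suc j) \<in> \<pi> j" by (simp add: add.commute)
      thus ?thesis using j by blast
    qed
  next
    case False
    hence c: "cell_le (\<pi> (Suc j)) (\<pi> j)" using cmp j by blast
    have "(1 - (1 - t)) *\<^sub>R x (Suc j) + (1 - t) *\<^sub>R x j \<in> \<pi> j"
      using j t by (intro seg[OF _ _ c]) auto
    hence "(1 - t) *\<^sub>R x j + t *\<^sub>R x (Suc j) \<in> \<pi> j" by (simp add: add.commute)
    thus ?thesis using j by blast
  qed
  obtain g where g: "path g" "g 0 = x 0" "g 1 = x l"
    "\<forall>r\<in>{0<..<1}. (\<exists>j. 0 < j \<and> j < l \<and> g r = x j) \<or>
        (\<exists>j<l. \<exists>t. 0 < t \<and> t < 1 \<and> g r = (1 - t) *\<^sub>R x j + t *\<^sub>R x (Suc j))"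
    using chain_path[OF l1, of x] by blast
  have inner: "\<exists>i<l. g r \<in> \<pi> i" if "r \<in> {0<..<1}" for r
    using g(4)[rule_format, OF that]
  proof
    assume "\<exists>j. 0 < j \<and> j < l \<and> g r = x j"
    then obtain j where "j < l" "g r = x j" by blast
    thus ?thesis using x[of j] by auto
  next
    assume "\<exists>j<l. \<exists>t. 0 < t \<and> t < 1 \<and> g r = (1 - t) *\<^sub>R x j + t *\<^sub>R x (Suc j)"
    then obtain j t where "j < l" "0 < t" "t < 1" "g r = (1 - t) *\<^sub>R x j + t *\<^sub>R x (Suc j)" by blast
    thus ?thesis using mid[of j t] by auto
  qed
  have all: "\<exists>i\<le>l. g r \<in> \<pi> i" if "r \<in> {0..1}" for r
  proof (cases "r = 0 \<or> r = 1")
    case True thus ?thesis using g(2,3) x[of 0] x[of l] by auto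
  next
    case False
    hence "r \<in> {0<..<1}" using that by auto
    thus ?thesis using inner by (meson less_imp_le)
  qed
  show ?thesis
  proof (rule exI[of _ g], intro conjI ballI)
    show "path g" by fact
    show "path_image g \<subseteq> polyhedron K"
    proof
      fix y assume "y \<in> path_image g"
      then obtain r where r: "r \<in> {0..1}" "y = g r" by (auto simp: path_image_def)
      then obtain i where i: "i \<le> l" "y \<in> \<pi> i" using all by blast
      hence "y \<in> convex hull (S i)" using S[OF i(1)] cell_sub_hull[OF finS(1)[OF i(1)]] by auto
      thus "y \<in> polyhedron K" using S[OF i(1)] unfolding polyhedron_def by blast
    qed
    show "cell_of K (g 0) = \<pi> 0" using g(2) x[of 0] cof[of 0] by simp
    show "cell_of K (g 1) = \<pi> l" using g(3) x[of l] cof[of l] by simp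
    fix r :: real assume "r \<in> {0<..<1}"
    then obtain i where "i < l" "g r \<in> \<pi> i" using inner by blast
    thus "\<exists>i<l. cell_of K (g r) = \<pi> i" using cof[of i] by auto
  qed
qed

end
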